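(* Let $\widetilde{\mathbb{F}}$ be a field. There exists an SD-map $f:\mathbb{F}_5\to\widetilde{\mathbb{F}}$ if and only if $\widetilde{\mathbb{F}}$ contains a primitive fourth root of unity.
   Context: $\mathbb{F}_5=\mathbb{Z}/5\mathbb{Z}$. A map $f:\mathbb{F}\to\widetilde{\mathbb{F}}$ between fields is called an SD-map if for all $x\neq y$ in $\mathbb{F}$ one has $f(x)\neq f(y)$ and \[ f\left(\frac{x+y}{x-y}\right)=\frac{f(x)+f(y)}{f(x)-f(y)}. \] *)

theory Defs
  imports "HOL-Library.Numeral_Type"
begin

text \<open>The field F_5 = Z/5Z is modelled by the numeral type 5 (arithmetic mod 5).
  This type is only a comm_ring_1 in the library, so division in F_5 is defined
  explicitly: for y nonzero, the inverse of y in F_5 is y^3 (Fermat), hence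
  x / y = x * y^3.\<close>

definition F5_div :: "5 \<Rightarrow> 5 \<Rightarrow> 5" where
  "F5_div x y = x * y ^ 3"

definition SD_map_F5 :: "(5 \<Rightarrow> 'b::field) \<Rightarrow> bool" where
  "SD_map_F5 f \<longleftrightarrow>
     (\<forall>x y. x \<noteq> y \<longrightarrow>
        f x \<noteq> f y \<and> f (F5_div (x + y) (x - y)) = (f x + f y) / (f x - f y))"

definition primitive_fourth_root :: "'b::field \<Rightarrow> bool" where
  "primitive_fourth_root z \<longleftrightarrow> z ^ 4 = 1 \<and> (\<forall>k::nat. 0 < k \<and> k < 4 \<longrightarrow> z ^ k \<noteq> 1)"

end

theory Submission
  imports Defs
begin

lemma ex5: "(x::5) = 0 \<or> x = 1 \<or> x = 2 \<or> x = 3 \<or> x = 4"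
proof (cases x)
  case (of_int z)
  then have "z = 0 \<or> z = 1 \<or> z = 2 \<or> z = 3 \<or> z = 4" by auto
  then show ?thesis using of_int by auto
qed

lemma m15: "(-1::5) = 4" by simp
lemma m64: "(64::5) = 4" by simp
lemma m256: "(256::5) = 1" by simp

lemma fwd:
  fixes f :: "5 \<Rightarrow> 'b::field"
  assumes "SD_map_F5 f"
  shows "\<exists>z :: 'b. primitive_fourth_root z"
proof -
  have h: "\<And>x y. x \<noteq> y \<Longrightarrow> f x \<noteq> f y \<and> f (F5_div (x + y) (x - y)) = (f x + f y) / (f x - f y)"
    using assms unfolding SD_map_F5_def by blast
  have e10: "f 1 = (f 1 + f 0) / (f 1 - f 0)" and n10: "f 1 \<noteq> f 0"
    using h[of 1 0] by (simp_all add: F5_div_def)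
  have e01: "f 4 = (f 0 + f 1) / (f 0 - f 1)"
    using h[of 0 1] by (simp add: F5_div_def m15 m64 m256)
  have d40: "F5_div (4+0) (4-0) = 1" by (simp add: F5_div_def)
  have e40: "f 1 = (f 4 + f 0) / (f 4 - f 0)" and n40: "f 4 \<noteq> f 0"
    using h[of 4 0] d40 by simp_all
  have d12: "F5_div (1+2) (1-2) = 2" by (simp add: F5_div_def)
  have e12: "f 2 = (f 1 + f 2) / (f 1 - f 2)" and n12: "f 1 \<noteq> f 2"
    using h[of 1 2] d12 by simp_all
  have n14: "f 1 \<noteq> f 4" using h[of 1 4] by simp
  have n24: "f 2 \<noteq> f 4" using h[of 2 4] by simp
  have a1: "f 1 * (f 1 - f 0) = f 1 + f 0" using e10 n10
    by (simp add: field_simps)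
  have a2: "f 4 * (f 0 - f 1) = f 0 + f 1" using e01 n10
    by (simp add: field_simps)
  have a3: "f 1 * (f 4 - f 0) = f 4 + f 0" using e40 n40
    by (simp add: field_simps)
  have a4: "f 2 * (f 1 - f 2) = f 1 + f 2" using e12 n12
    by (simp add: field_simps)
  have "(f 0 - f 1) * (f 4 + f 1) = 0" using a1 a2 by (simp add: algebra_simps)
  then have f4: "f 4 = - f 1" using n10 by (simp add: eq_neg_iff_add_eq_0)
  have two: "(2::'b) \<noteq> 0"
  proof
    assume "(2::'b) = 0"
    then have "f 1 + f 1 = 0" by (metis mult_2 mult_zero_left)
    then show False using n14 f4 by (simp add: add_eq_0_iff)
  qed
  have f1: "f 1 = 1" and f0: "f 0 = 0"
  proof -
    have b1: "f 1 * (- f 1 - f 0) = - f 1 + f 0" using a3 f4 by simp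
    have "2 * (f 1 * f 1) = 2 * f 1" using a1 b1 by (simp add: algebra_simps)
    then have "f 1 * f 1 = f 1" using two by simp
    then have "f 1 = 0 \<or> f 1 = 1" by (metis mult_cancel_left1 mult.commute mult_zero_left)
    moreover have "2 * (f 0 * (f 1 + 1)) = 0" using a1 b1 by (simp add: algebra_simps)
    ultimately show "f 1 = 1" "f 0 = 0" using two n10 by auto
  qed
  have "1 + f 2 * f 2 = 0" using a4 f1 by (simp add: algebra_simps)
  then have sq: "f 2 * f 2 = -1" by (metis add.commute eq_neg_iff_add_eq_0)
  show ?thesis
  proof (intro exI[of _ "f 2"])
    have "f 2 ^ 4 = (f 2 * f 2) * (f 2 * f 2)" by (simp add: power_numeral_reduce)
    moreover have "f 2 ^ 3 = - f 2" using sq by (simp add: power_numeral_reduce mult.assoc[symmetric])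
    moreover have "f 2 ^ 2 \<noteq> 1" using sq two by (simp add: power2_eq_square)
    moreover have "- f 2 \<noteq> 1" using n24 f4 f1 by (metis minus_minus)
    moreover have "\<And>k::nat. 0 < k \<and> k < 4 \<longleftrightarrow> k = 1 \<or> k = 2 \<or> k = 3" by auto
    ultimately show "primitive_fourth_root (f 2)" unfolding primitive_fourth_root_def
      using sq n12 f1 by auto
  qed
qed

lemma bwd:
  fixes z :: "'b::field"
  assumes "primitive_fourth_root z"
  shows "\<exists>f :: 5 \<Rightarrow> 'b. SD_map_F5 f"
proof -
  have z4: "z ^ 4 = 1" and z1: "z \<noteq> 1" and z2: "z ^ 2 \<noteq> 1" and z3: "z ^ 3 \<noteq> 1"
    using assms unfolding primitive_fourth_root_def by auto
  have "(z ^ 2 - 1) * (z ^ 2 + 1) = 0" using z4 by (simp add: algebra_simps power_numeral_reduce)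
  then have sq: "z * z = -1" using z2 by (simp add: power2_eq_square eq_neg_iff_add_eq_0)
  have z0: "z \<noteq> 0" using sq by auto
  have m1: "(-1::'b) \<noteq> 1" using z2 sq by (simp add: power2_eq_square)
  have two: "(2::'b) \<noteq> 0" using m1 by (metis add_eq_0_iff one_add_one)
  have zm: "z \<noteq> - z" using two z0 by (metis add_eq_0_iff mult_2 mult_eq_0_iff)
  have zm1: "z \<noteq> -1" using z3 sq by (metis mult_minus1_right power3_eq_cube minus_minus mult.commute)
  have sq': "- (z * z) = 1" using sq by simp
  have zn1: "- z \<noteq> 1" using zm1 by (metis minus_minus)
  define f :: "5 \<Rightarrow> 'b" where "f x = (if x = 0 then 0 else if x = 1 then 1 else if x = 2 then z
     else if x = 3 then - z else -1)" for x
  have "SD_map_F5 f" unfolding SD_map_F5_def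
  proof (intro allI impI)
    fix x y :: 5
    assume "x \<noteq> y"
    then show "f x \<noteq> f y \<and> f (F5_div (x + y) (x - y)) = (f x + f y) / (f x - f y)"
      using ex5[of x] ex5[of y] z0 z1 zm zm1 m1 two sq sq' zn1
      apply (elim disjE)
      apply (simp_all add: f_def F5_div_def field_simps eq_neg_iff_add_eq_0)
      apply (auto simp: divide_simps algebra_simps)
      done
  qed
  then show ?thesis by blast
qed

theorem proposition2p3:
  shows "(\<exists>f :: 5 \<Rightarrow> 'b::field. SD_map_F5 f) \<longleftrightarrow> (\<exists>z :: 'b. primitive_fourth_root z)"
  using fwd bwd by blast

end
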